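(* There exist absolute constants $C_0,C_1>0$ such that for every $c=-2-t$ with $0<t<1$ the following hold: (a) $|r_n(c)|\le 2+C_0\,4^{n-1}t$ for all $1\le n\le k(c)$; (b) $t\le C_1 4^{-k(c)}$.
   Context: For real $c$ let $r_n(c)=f_c^{\circ n}(0)$ where $f_c(z)=z^2+c$; thus $r_1(c)=c$ and $r_{n+1}(c)=r_n(c)^2+c$. For $-3<c<-2$, $k(c)$ denotes the smallest positive integer $k$ such that $r_{k+1}(c)/r_k(c)\ge 36$. *)

theory Defs
  imports Complex_Main
begin

primrec r :: "nat \<Rightarrow> real \<Rightarrow> real" where
  "r 0 c = 0"
| "r (Suc n) c = (r n c)^2 + c"

definition kc :: "real \<Rightarrow> nat" where
  "kc c = (LEAST k. 0 < k \<and> r (k+1) c / r k c \<ge> 36)"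

end

theory Submission
  imports Defs
begin

lemma rec_e: "r (Suc n) (-2-t) - 2 = 4*(r n (-2-t) - 2) + (r n (-2-t) - 2)^2 - t"
  by (simp add: power2_eq_square algebra_simps)

lemma r2: "r 2 (-2-t) - 2 = 3*t + t^2"
  by (simp add: numeral_2_eq_2 power2_eq_square algebra_simps)

lemma L1:
  assumes t0: "0 < t" and t1: "t < 1"
  shows "t \<le> r (m+2) (-2-t) - 2 \<and> 4^m * t \<le> r (m+2) (-2-t) - 2 - t/3 \<and>
         r (m+2) (-2-t) - 2 \<le> 4^(m+1) * t * exp ((r (m+2) (-2-t) - 2)/8)"
proof (induction m)
  case 0
  have e: "r (0+2) (-2-t) - 2 = 3*t + t^2" unfolding add_0 by (rule r2)
  have ex: "1 \<le> exp ((3*t+t^2)/8)" using t0 by (simp add: one_le_exp_iff)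
  have "3*t + t^2 \<le> 4*t" using t0 t1 using mult_strict_right_mono[OF t1 t0] by (simp add: power2_eq_square)
  also have "\<dots> \<le> 4*t*exp ((3*t+t^2)/8)" using ex t0 by simp
  finally show ?case unfolding e using t0 by (simp add: power2_eq_square) (use mult_pos_pos[OF t0 t0] in linarith)
next
  case (Suc m)
  define x where "x = r (m+2) (-2-t) - 2"
  define y where "y = r (Suc m+2) (-2-t) - 2"
  have y: "y = 4*x + x^2 - t" unfolding x_def y_def using rec_e[of "m+2" t] by simp
  have IH1: "t \<le> x" and IH2: "4^m*t \<le> x - t/3" and IH3: "x \<le> 4^(m+1)*t*exp (x/8)"
    using Suc.IH unfolding x_def by auto
  have sq: "0 \<le> x^2" by simp
  have A: "t \<le> y" using y IH1 sq t0 by linarith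
  have B: "4^(Suc m)*t \<le> y - t/3"
  proof -
    have "4^(Suc m)*t = 4*(4^m*t)" by simp
    thus ?thesis using y IH2 sq by linarith
  qed
  have x0: "0 \<le> x" using IH1 t0 by linarith
  have "y \<le> 4*x*(1 + x/4)" using y t0 by (simp add: power2_eq_square algebra_simps)
  also have "\<dots> \<le> 4*x*exp (x/4)"
    using exp_ge_add_one_self[of "x/4"] x0 by (intro mult_left_mono) (auto simp: add.commute)
  also have "\<dots> \<le> 4*(4^(m+1)*t*exp (x/8))*exp (x/4)"
  proof -
    have P: "0 \<le> 4*exp (x/4)" by simp
    show ?thesis using mult_right_mono[OF IH3 P] by (simp add: mult_ac)
  qed
  also have "\<dots> = 4^(m+2)*t*exp (3*x/8)"
  proof -
    have E: "exp (x/8) * exp (x/4) = exp (3*x/8)" by (subst exp_add[symmetric]) simp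
    have G: "\<And>a b. 4*(4^(m+1)*t*a)*b = 4^(m+2)*t*(a*b)" by simp
    show ?thesis unfolding G E ..
  qed
  also have "\<dots> \<le> 4^(m+2)*t*exp (y/8)"
  proof -
    have "3*x \<le> y" using y IH1 sq by linarith
    hence "exp (3*x/8) \<le> exp (y/8)" by simp
    thus ?thesis using t0 by (intro mult_left_mono) auto
  qed
  finally have C: "y \<le> 4^(Suc m+1)*t*exp (y/8)" by simp
  show ?case using A B C unfolding y_def by simp
qed

lemma L1':
  assumes "0 < t" "t < 1" "2 \<le> n"
  shows "t \<le> r n (-2-t) - 2 \<and> 4^(n-2) * t \<le> r n (-2-t) - 2 - t/3 \<and>
         r n (-2-t) - 2 \<le> 4^(n-1) * t * exp ((r n (-2-t) - 2)/8)"
proof -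
  obtain m where n: "n = m+2" using assms(3) by (metis add.commute le_Suc_ex)
  have d: "m+2-2 = m" "m+2-1 = m+1" by simp_all
  show ?thesis using L1[OF assms(1,2), of m] unfolding n d .
qed

lemma Main:
  assumes t0: "0 < t" and t1: "t < 1"
  shows "(\<forall>n. 1 \<le> n \<and> n \<le> kc (-2 - t) \<longrightarrow>
            \<bar>r n (-2 - t)\<bar> \<le> 2 + (10*exp (35/8)) * 4 ^ (n - 1) * t) \<and>
       t \<le> 4096 * (1 / 4) ^ kc (-2 - t)"
proof -
  define c where "c = -2 - t"
  define P where "P = (\<lambda>k. 0 < k \<and> r (k+1) c / r k c \<ge> 36)"
  obtain m where m: "40 / t < 4^m" using real_arch_pow[of 4 "40/t"] by auto
  have "40 < 4^m * t" using m t0 by (simp add: divide_less_eq)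
  hence big: "42 \<le> r (m+2) c" using L1'[OF t0 t1, of "m+2"] t0 unfolding c_def by simp
  have "P (m+2)"
  proof -
    have rp: "0 < r (m+2) c" using big by simp
    have "r (m+3) c = (r (m+2) c)^2 + c" by (simp add: numeral_3_eq_3 numeral_2_eq_2)
    moreover have "42 * r (m+2) c \<le> (r (m+2) c)^2"
      using mult_right_mono[OF big, of "r (m+2) c"] rp unfolding power2_eq_square by linarith
    ultimately have "36 * r (m+2) c \<le> r (m+3) c" using big t1 unfolding c_def by linarith
    hence X: "36 \<le> r (m+3) c / r (m+2) c" using pos_le_divide_eq[OF rp] by (metis mult.commute)
    have e3: "m+2+1 = m+3" by simp
    have "0 < m+2" by simp
    thus ?thesis unfolding P_def e3 using X by blast
  qed
  hence Pk: "P (kc c)" unfolding kc_def P_def by (rule LeastI)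
  have minim: "\<And>n. n < kc c \<Longrightarrow> \<not> P n" unfolding kc_def P_def by (rule not_less_Least)
  define k where "k = kc c"
  have ek: "\<And>n. 2 \<le> n \<Longrightarrow> t \<le> r n c - 2 \<and> 4^(n-2) * t \<le> r n c - 2 - t/3 \<and>
         r n c - 2 \<le> 4^(n-1) * t * exp ((r n c - 2)/8)"
    using L1'[OF t0 t1] unfolding c_def by blast
  have k2: "2 \<le> k"
  proof (rule ccontr)
    assume "\<not> 2 \<le> k"
    moreover have "0 < k" using Pk unfolding P_def k_def by simp
    ultimately have "k = 1" by simp
    hence "36 \<le> (c^2+c) / c" using Pk unfolding P_def k_def by simp
    moreover have "c^2 + c > 0"
    proof -
      have "c^2+c = 2+3*t+t^2" unfolding c_def by (simp add: power2_eq_square algebra_simps)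
      moreover have "0 \<le> t^2" by simp
      ultimately show ?thesis using t0 by linarith
    qed
    moreover have "c < 0" using t0 unfolding c_def by simp
    ultimately show False using divide_pos_neg[of "c^2+c" c] by linarith
  qed
  have bnd: "\<And>n. 2 \<le> n \<Longrightarrow> n < k \<Longrightarrow> r n c - 2 \<le> 35"
  proof -
    fix n assume n2: "2 \<le> n" and nk: "n < k"
    have rp: "0 < r n c" using ek[OF n2] t0 by linarith
    have "\<not> P n" using minim nk unfolding k_def by simp
    hence "r (n+1) c / r n c < 36" using n2 unfolding P_def by simp
    hence lt: "r (n+1) c < 36 * r n c" using rp by (simp add: divide_less_eq)
    have eq: "r (n+1) c = (r n c)^2 + c" by simp
    show "r n c - 2 \<le> 35"
    proof (rule ccontr)
      assume H: "\<not> r n c - 2 \<le> 35"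
      hence "37 * r n c \<le> (r n c)^2" using rp by (simp add: power2_eq_square)
      thus False using lt eq t1 rp H unfolding c_def by linarith
    qed
  qed
  define C0 where "C0 = 10*exp (35/8 :: real)"
  have "1 \<le> exp (35/8::real)" by (simp add: one_le_exp_iff)
  hence C0: "1 \<le> C0" unfolding C0_def by linarith
  have ge2: "r n c - 2 \<le> C0 * 4^(n-1) * t" if n2: "2 \<le> n" and nk: "n \<le> k" for n
  proof (cases "n < k")
    case True
    have "r n c - 2 \<le> 4^(n-1) * t * exp ((r n c - 2)/8)" using ek[OF n2] by blast
    also have "\<dots> \<le> 4^(n-1) * t * exp (35/8)"
      using bnd[OF n2 True] t0 by (intro mult_left_mono) auto
    also have "\<dots> \<le> C0 * 4^(n-1) * t" unfolding C0_def using t0 by simp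
    finally show ?thesis .
  next
    case False
    hence nk: "n = k" using nk by simp
    show ?thesis
    proof (cases "k = 2")
      case True
      have "r n c - 2 = 3*t + t^2" using r2 nk True unfolding c_def by simp
      also have "\<dots> \<le> 4 * t" using t0 t1 using mult_strict_right_mono[OF t1 t0] by (simp add: power2_eq_square)
      also have "\<dots> \<le> C0 * 4^(n-1) * t" using nk True C0 t0 by simp
      finally show ?thesis .
    next
      case False
      obtain j where j: "k = Suc j" and j2: "2 \<le> j" using False k2 by (intro that[of "k-1"]) auto
      define x where "x = r j c - 2"
      have x35: "x \<le> 35" using bnd[OF j2] j unfolding x_def by simp
      have xt: "t \<le> x" using ek[OF j2] unfolding x_def by blast
      have xb: "x \<le> 4^(j-1) * t * exp (35/8)"
      proof -
        have "x \<le> 4^(j-1) * t * exp (x/8)" using ek[OF j2] unfolding x_def by blast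
        also have "\<dots> \<le> 4^(j-1) * t * exp (35/8)" using x35 t0 by (intro mult_left_mono) auto
        finally show ?thesis .
      qed
      have "r n c - 2 = 4*x + x^2 - t" using rec_e[of j t] nk j unfolding x_def c_def by simp
      also have "\<dots> \<le> 39 * x" proof -
        have x0: "0 \<le> x" using xt t0 by linarith
        have "x*x \<le> 35*x" using mult_right_mono[OF x35 x0] .
        thus ?thesis using t0 x0 unfolding power2_eq_square by linarith
      qed
      also have "\<dots> \<le> 39 * (4^(j-1) * t * exp (35/8))" using xb by simp
      also have "\<dots> \<le> 40 * (4^(j-1) * t * exp (35/8))" using t0 by simp
      also have "\<dots> = C0 * 4^(n-1) * t"
      proof -
        have "4^(n-1) = (4::real) * 4^(j-1)" using nk j j2
        proof -
          have "n - 1 = Suc (j-1)" using nk j j2 by simp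
          thus ?thesis by (simp only: power_Suc)
        qed
        thus ?thesis unfolding C0_def by simp
      qed
      finally show ?thesis .
    qed
  qed
  have partA: "\<bar>r n c\<bar> \<le> 2 + C0 * 4 ^ (n - 1) * t" if "1 \<le> n" "n \<le> k" for n
  proof (cases "n = 1")
    case True
    thus ?thesis using t0 C0 unfolding c_def by simp
  next
    case False
    hence n2: "2 \<le> n" using that by simp
    have "0 < r n c" using ek[OF n2] t0 by linarith
    thus ?thesis using ge2[OF n2 that(2)] by simp
  qed
  have partB: "t \<le> 4096 * (1/4)^k"
  proof (cases "k = 2")
    case True thus ?thesis using t1 by (simp add: power2_eq_square)
  next
    case False
    obtain j where j: "k = Suc j" and j2: "2 \<le> j" using False k2 by (intro that[of "k-1"]) auto
    have "4^(j-2) * t \<le> r j c - 2 - t/3" using ek[OF j2] by blast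
    hence "4^(j-2) * t \<le> 35" using bnd[OF j2] j t0 by simp
    moreover obtain i where i: "j = i + 2" using j2 by (metis add.commute le_Suc_ex)
    ultimately have "4^i * t \<le> 35" by simp
    hence "4^k * t \<le> 64 * 35" using j i by (simp add: mult.commute)
    hence "t \<le> 4096 / 4^k" by (simp add: field_simps)
    thus ?thesis by (simp add: power_one_over)
  qed
  show ?thesis
  proof (intro conjI allI impI)
    fix n assume A: "1 \<le> n \<and> n \<le> kc (-2-t)"
    have "1 \<le> n" "n \<le> k" using A unfolding k_def c_def by auto
    from partA[OF this] show "\<bar>r n (-2-t)\<bar> \<le> 2 + 10*exp (35/8) * 4 ^ (n - 1) * t"
      unfolding C0_def c_def .
  next
    show "t \<le> 4096 * (1 / 4) ^ kc (-2-t)" using partB unfolding k_def c_def .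
  qed
qed

theorem mainTheorem6:
  shows "\<exists>C0 C1 :: real. C0 > 0 \<and> C1 > 0 \<and>
    (\<forall>t :: real. 0 < t \<and> t < 1 \<longrightarrow>
       (\<forall>n. 1 \<le> n \<and> n \<le> kc (-2 - t) \<longrightarrow>
            \<bar>r n (-2 - t)\<bar> \<le> 2 + C0 * 4 ^ (n - 1) * t) \<and>
       t \<le> C1 * (1 / 4) ^ kc (-2 - t))"
  apply (rule exI[of _ "10*exp (35/8)"], rule exI[of _ 4096])
  apply (rule conjI, simp, rule conjI, simp)
  apply (rule allI, rule impI)
  apply (erule conjE)
  apply (erule (1) Main)
  done

end
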